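(* Let $\Xi$ be a system. If $\Xi$ has a patchwork solution, then $\Xi$ is solvable.
   Context: A system $\Xi$ is a bipartite graph (undirected, simple) whose vertices are coloured "pairs" and "triples", together with a set of links $\lambda=(\tau,S)$, where $\tau$ is a triple (the tip) and $S$ is a set of pairs adjacent to $\tau$ (the base vertices; the edges $\{\tau,\pi\}$, $\pi\in S$, are the legs of $\lambda$), and a weight $\mu_\lambda\in\mathbb C^\times$ for each link. The support of $\lambda$ is the subgraph with vertices $S\cup\{\tau\}$ and edges $\{\tau,\pi\}$, $\pi\in S$. A subsystem is a subgraph together with a subset of the links whose support lies in the subgraph (same weights); it is full if it contains all edges of $\Xi$ between its vertices and all links of $\Xi$ supported in it. An edge $\{\tau,\pi\}$ is simply linked if $(\tau,\{\pi\})$ is a link and the edge is a leg of no other link. A solution of a system is an orientation of all its edges such that (S1) every triple has exactly one edge oriented away from it, and that edge is simply linked; (S2) every pair has at most one edge oriented towards it; (S3) there is no oriented cycle. A system is solvable if it has a solution. A patch of $\Xi$ is a full subsystem $\Xi'$ that contains the base vertices of every link of $\Xi$ having a leg in $\Xi'$. A patchwork for $\Xi$ is a family $\{\Xi_k\}_{k\in I}$ of patches indexed by a partially ordered set $I$ such that (P1) every vertex of $\Xi$ lies in some $\Xi_k$; (P2) for $k\ne l$, $\Xi_k$ and $\Xi_l$ have no triple in common; (P3) if $\tau$ is a triple in $\Xi_l$ and $\{\tau,\pi\}$ is an edge of $\Xi$, then $\pi$ is a pair of $\Xi_k$ for some $k\le l$. A patchwork solution is a patchwork together with a solution of each patch $\Xi_k$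 such that (PS) if $\pi$ is a pair in $\Xi_k\cap\Xi_l$ and some edge $\{\tau,\pi\}$ of $\Xi_k$ is oriented towards $\pi$, then $k\le l$. *)

theory Defs
  imports Complex_Main
begin

text \<open>An (undirected) edge between a triple t and a
pair p is represented canonically by the ordered tuple (t, p), triple first.
A link is a tuple (tip, set of base vertices).\<close>

record 'v system =
  pairs   :: "'v set"
  triples :: "'v set"
  edges   :: "('v \<times> 'v) set"
  links   :: "('v \<times> 'v set) set"
  weight  :: "('v \<times> 'v set) \<Rightarrow> complex"

definition wf_system :: "'v system \<Rightarrow> bool" where
  "wf_system X \<longleftrightarrow>
     pairs X \<inter> triples X = {} \<and>
     finite (pairs X \<union> triples X) \<and>
     edges X \<subseteq> triples X \<times> pairs X \<and>
     (\<forall>(t, S) \<in> links X. t \<in> triples X \<and> (\<forall>p\<in>S. (t, p) \<in> edges X)) \<and>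
     (\<forall>l \<in> links X. weight X l \<noteq> 0)"

definition legs :: "'v \<times> 'v set \<Rightarrow> ('v \<times> 'v) set" where
  "legs l = {(fst l, p) | p. p \<in> snd l}"

definition simply_linked :: "'v system \<Rightarrow> 'v \<times> 'v \<Rightarrow> bool" where
  "simply_linked X e \<longleftrightarrow>
     (fst e, {snd e}) \<in> links X \<and>
     (\<forall>l \<in> links X. e \<in> legs l \<longrightarrow> l = (fst e, {snd e}))"

text \<open>An orientation of the edges is given by the set D of edges oriented away from
their triple (i.e. from t towards p); all other edges are oriented from p to t.\<close>
definition orient_rel :: "'v system \<Rightarrow> ('v \<times> 'v) set \<Rightarrow> ('v \<times> 'v) set" where
  "orient_rel X D = D \<union> {(p, t) | t p. (t, p) \<in> edges X - D}"

definition solution :: "'v system \<Rightarrow> ('v \<times> 'v) set \<Rightarrow> bool" where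
  "solution X D \<longleftrightarrow>
     D \<subseteq> edges X \<and>
     (\<forall>t \<in> triples X. \<exists>!p. (t, p) \<in> D) \<and>
     (\<forall>e \<in> D. simply_linked X e) \<and>
     (\<forall>p \<in> pairs X. \<forall>t1 t2. (t1, p) \<in> D \<longrightarrow> (t2, p) \<in> D \<longrightarrow> t1 = t2) \<and>
     acyclic (orient_rel X D)"

definition solvable :: "'v system \<Rightarrow> bool" where
  "solvable X \<longleftrightarrow> (\<exists>D. solution X D)"

definition supported_in :: "'v system \<Rightarrow> 'v \<times> 'v set \<Rightarrow> bool" where
  "supported_in Y l \<longleftrightarrow> fst l \<in> triples Y \<and> snd l \<subseteq> pairs Y \<and> legs l \<subseteq> edges Y"

definition subsystem :: "'v system \<Rightarrow> 'v system \<Rightarrow> bool" where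
  "subsystem Y X \<longleftrightarrow>
     pairs Y \<subseteq> pairs X \<and> triples Y \<subseteq> triples X \<and>
     edges Y \<subseteq> edges X \<and> edges Y \<subseteq> triples Y \<times> pairs Y \<and>
     links Y \<subseteq> links X \<and> (\<forall>l \<in> links Y. supported_in Y l) \<and>
     (\<forall>l \<in> links Y. weight Y l = weight X l)"

definition full_subsystem :: "'v system \<Rightarrow> 'v system \<Rightarrow> bool" where
  "full_subsystem Y X \<longleftrightarrow>
     subsystem Y X \<and>
     edges Y = edges X \<inter> (triples Y \<times> pairs Y) \<and>
     links Y = {l \<in> links X. supported_in Y l}"

definition patch :: "'v system \<Rightarrow> 'v system \<Rightarrow> bool" where
  "patch X Y \<longleftrightarrow>
     full_subsystem Y X \<and>
     (\<forall>l \<in> links X. legs l \<inter> edges Y \<noteq> {} \<longrightarrow> snd l \<subseteq> pairs Y)"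

definition patchwork :: "'v system \<Rightarrow> 'i::order set \<Rightarrow> ('i \<Rightarrow> 'v system) \<Rightarrow> bool" where
  "patchwork X I \<Xi> \<longleftrightarrow>
     (\<forall>k \<in> I. patch X (\<Xi> k)) \<and>
     (pairs X \<union> triples X \<subseteq> (\<Union>k \<in> I. pairs (\<Xi> k) \<union> triples (\<Xi> k))) \<and>
     (\<forall>k \<in> I. \<forall>l \<in> I. k \<noteq> l \<longrightarrow> triples (\<Xi> k) \<inter> triples (\<Xi> l) = {}) \<and>
     (\<forall>l \<in> I. \<forall>t \<in> triples (\<Xi> l). \<forall>p. (t, p) \<in> edges X \<longrightarrow>
        (\<exists>k \<in> I. k \<le> l \<and> p \<in> pairs (\<Xi> k)))"

definition patchwork_solution ::
  "'v system \<Rightarrow> 'i::order set \<Rightarrow> ('i \<Rightarrow> 'v system) \<Rightarrow> ('i \<Rightarrow> ('v \<times> 'v) set) \<Rightarrow> bool" where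
  "patchwork_solution X I \<Xi> D \<longleftrightarrow>
     patchwork X I \<Xi> \<and>
     (\<forall>k \<in> I. solution (\<Xi> k) (D k)) \<and>
     (\<forall>k \<in> I. \<forall>l \<in> I. \<forall>p \<in> pairs (\<Xi> k) \<inter> pairs (\<Xi> l).
        (\<exists>t. (t, p) \<in> edges (\<Xi> k) \<and> (t, p) \<in> D k) \<longrightarrow> k \<le> l)"

end

theory Submission
  imports Defs
begin

theorem proposition2p32:
  fixes X :: "'v system" and I :: "'i::order set"
    and \<Xi> :: "'i \<Rightarrow> 'v system" and D :: "'i \<Rightarrow> ('v \<times> 'v) set"
  assumes "wf_system X"
    and "patchwork_solution X I \<Xi> D"
  shows "solvable X"
proof -
  have PT: "pairs X \<inter> triples X = {}" and EX: "edges X \<subseteq> triples X \<times> pairs X"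
    and LX: "\<And>t S p. (t, S) \<in> links X \<Longrightarrow> p \<in> S \<Longrightarrow> (t, p) \<in> edges X"
    using assms(1) unfolding wf_system_def by auto
  have PW: "patchwork X I \<Xi>" and SOL: "\<And>k. k \<in> I \<Longrightarrow> solution (\<Xi> k) (D k)"
    and PS: "\<And>k l p t. k \<in> I \<Longrightarrow> l \<in> I \<Longrightarrow> p \<in> pairs (\<Xi> k) \<Longrightarrow> p \<in> pairs (\<Xi> l)
       \<Longrightarrow> (t, p) \<in> edges (\<Xi> k) \<Longrightarrow> (t, p) \<in> D k \<Longrightarrow> k \<le> l"
    using assms(2) unfolding patchwork_solution_def by blast+
  have PA: "\<And>k. k \<in> I \<Longrightarrow> patch X (\<Xi> k)"
    and P1: "pairs X \<union> triples X \<subseteq> (\<Union>k \<in> I. pairs (\<Xi> k) \<union> triples (\<Xi> k))"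
    and P2: "\<And>k l. k \<in> I \<Longrightarrow> l \<in> I \<Longrightarrow> k \<noteq> l \<Longrightarrow> triples (\<Xi> k) \<inter> triples (\<Xi> l) = {}"
    and P3: "\<And>l t p. l \<in> I \<Longrightarrow> t \<in> triples (\<Xi> l) \<Longrightarrow> (t, p) \<in> edges X \<Longrightarrow>
        (\<exists>k \<in> I. k \<le> l \<and> p \<in> pairs (\<Xi> k))"
    using PW unfolding patchwork_def by blast+
  have SP: "\<And>k. k \<in> I \<Longrightarrow> pairs (\<Xi> k) \<subseteq> pairs X" 
    and ST: "\<And>k. k \<in> I \<Longrightarrow> triples (\<Xi> k) \<subseteq> triples X"
    and SE: "\<And>k. k \<in> I \<Longrightarrow> edges (\<Xi> k) \<subseteq> triples (\<Xi> k) \<times> pairs (\<Xi> k)"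
    and SL: "\<And>k. k \<in> I \<Longrightarrow> links (\<Xi> k) = {l \<in> links X. supported_in (\<Xi> k) l}"
    and FE: "\<And>k. k \<in> I \<Longrightarrow> edges (\<Xi> k) = edges X \<inter> (triples (\<Xi> k) \<times> pairs (\<Xi> k))"
    and PL: "\<And>k l. k \<in> I \<Longrightarrow> l \<in> links X \<Longrightarrow> legs l \<inter> edges (\<Xi> k) \<noteq> {} \<Longrightarrow> snd l \<subseteq> pairs (\<Xi> k)"
    using PA unfolding patch_def full_subsystem_def subsystem_def by blast+
  have DE: "\<And>k. k \<in> I \<Longrightarrow> D k \<subseteq> edges (\<Xi> k)"
    and DU: "\<And>k t. k \<in> I \<Longrightarrow> t \<in> triples (\<Xi> k) \<Longrightarrow> \<exists>!p. (t, p) \<in> D k"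
    and DS: "\<And>k e. k \<in> I \<Longrightarrow> e \<in> D k \<Longrightarrow> simply_linked (\<Xi> k) e"
    and DP: "\<And>k p t1 t2. k \<in> I \<Longrightarrow> p \<in> pairs (\<Xi> k) \<Longrightarrow> (t1, p) \<in> D k \<Longrightarrow> (t2, p) \<in> D k \<Longrightarrow> t1 = t2"
    and DA: "\<And>k. k \<in> I \<Longrightarrow> acyclic (orient_rel (\<Xi> k) (D k))"
    using SOL unfolding solution_def by blast+
  have DkE: "\<And>k t p. k \<in> I \<Longrightarrow> (t, p) \<in> D k \<Longrightarrow> t \<in> triples (\<Xi> k) \<and> p \<in> pairs (\<Xi> k) \<and> (t,p) \<in> edges X"
    using DE SE FE by blast
  define DD where "DD = (\<Union>k\<in>I. D k)"
  define R where "R = orient_rel X DD"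
  have trip_lev: "\<exists>k\<in>I. t \<in> triples (\<Xi> k)" if "t \<in> triples X" for t
    using P1 that SP PT by blast
  have trip_uniq: "k = l" if "k \<in> I" "l \<in> I" "t \<in> triples (\<Xi> k)" "t \<in> triples (\<Xi> l)" for k l t
    using P2 that by blast
  have DD_sub: "DD \<subseteq> edges X" using DkE unfolding DD_def by fast
  have S1: "\<forall>t \<in> triples X. \<exists>!p. (t, p) \<in> DD"
  proof
    fix t assume "t \<in> triples X"
    then obtain k where k: "k \<in> I" "t \<in> triples (\<Xi> k)" using trip_lev by blast
    then obtain p where p: "(t,p) \<in> D k" using DU by blast
    show "\<exists>!p. (t, p) \<in> DD"
    proof (rule ex1I[of _ p])
      show "(t,p) \<in> DD" using p k unfolding DD_def by blast
      fix q assume "(t,q) \<in> DD"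
      then obtain l where l: "l \<in> I" "(t,q) \<in> D l" unfolding DD_def by blast
      then have "l = k" using DkE trip_uniq k by blast
      then show "q = p" using DU k p l by blast
    qed
  qed
  have S2: "\<forall>e \<in> DD. simply_linked X e"
  proof
    fix e assume "e \<in> DD"
    then obtain k t p where k: "k \<in> I" "(t,p) \<in> D k" "e = (t,p)" unfolding DD_def by (cases e) blast
    have sl: "simply_linked (\<Xi> k) (t,p)" using DS k by blast
    have eK: "(t,p) \<in> edges (\<Xi> k)" using DE k by blast
    show "simply_linked X e" unfolding simply_linked_def k(3) fst_conv snd_conv
    proof
      show "(t, {p}) \<in> links X" using sl SL k(1) unfolding simply_linked_def by auto
      show "\<forall>l\<in>links X. (t, p) \<in> legs l \<longrightarrow> l = (t, {p})"
      proof (intro ballI impI)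
        fix l assume l: "l \<in> links X" "(t,p) \<in> legs l"
        have "snd l \<subseteq> pairs (\<Xi> k)" using PL[OF k(1) l(1)] l(2) eK by blast
        moreover have "fst l = t" using l(2) unfolding legs_def by auto
        moreover have "legs l \<subseteq> edges X" using LX l(1) unfolding legs_def by (cases l) auto
        ultimately have "supported_in (\<Xi> k) l" unfolding supported_in_def
          using DkE[OF k(1,2)] FE[OF k(1)] unfolding legs_def by auto
        then have "l \<in> links (\<Xi> k)" using SL k(1) l(1) by blast
        then show "l = (t, {p})" using sl l(2) unfolding simply_linked_def by auto
      qed
    qed
  qed
  have S3: "\<forall>p \<in> pairs X. \<forall>t1 t2. (t1, p) \<in> DD \<longrightarrow> (t2, p) \<in> DD \<longrightarrow> t1 = t2"
  proof (intro ballI allI impI)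
    fix p t1 t2 assume "(t1, p) \<in> DD" "(t2, p) \<in> DD"
    then obtain k l where kl: "k \<in> I" "(t1,p) \<in> D k" "l \<in> I" "(t2,p) \<in> D l" unfolding DD_def by blast
    have "k \<le> l" using PS[OF kl(1,3)] DkE kl DE by blast
    moreover have "l \<le> k" using PS[OF kl(3,1)] DkE kl DE by blast
    ultimately have "k = l" by simp
    then show "t1 = t2" using DP kl DkE by blast
  qed
  define levrel where "levrel v k \<longleftrightarrow> k \<in> I \<and> (v \<in> triples (\<Xi> k) \<or> (\<exists>t. (t, v) \<in> D k))" for v k
  have lev_uniq: "k = l" if "levrel v k" "levrel v l" for v k l
  proof -
    have "k \<in> I" "l \<in> I" using that unfolding levrel_def by auto
    then show ?thesis using that unfolding levrel_def
      by (smt (verit) DE DkE P2 PS PT ST SP disjoint_iff order_antisym subsetD)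
  qed
  have step: "\<exists>k'. levrel b k' \<and> k \<le> k'" if "(a,b) \<in> R" "levrel a k" for a b k
  proof -
    consider (d) "(a,b) \<in> DD" | (r) "(b,a) \<in> edges X" "(b,a) \<notin> DD"
      using \<open>(a,b) \<in> R\<close> unfolding R_def orient_rel_def by blast
    then show ?thesis
    proof cases
      case d
      then obtain j where j: "j \<in> I" "(a,b) \<in> D j" unfolding DD_def by blast
      then have "levrel a j" "levrel b j" unfolding levrel_def using DkE by blast+
      then show ?thesis using lev_uniq \<open>levrel a k\<close> by blast
    next
      case r
      then have bt: "b \<in> triples X" "a \<in> pairs X" using EX by blast+
      then obtain l where l: "l \<in> I" "b \<in> triples (\<Xi> l)" using trip_lev by blast
      obtain k'' where k'': "k'' \<in> I" "k'' \<le> l" "a \<in> pairs (\<Xi> k'')" using P3[OF l r(1)] by blast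
      have "a \<notin> triples (\<Xi> k)" using bt PT ST \<open>levrel a k\<close> unfolding levrel_def by blast
      then obtain t' where t': "(t',a) \<in> D k" "k \<in> I" using \<open>levrel a k\<close> unfolding levrel_def by blast
      have "k \<le> k''" using PS[OF t'(2) k''(1)] t' DkE k'' DE by blast
      moreover have "levrel b l" using l unfolding levrel_def by blast
      ultimately show ?thesis using k'' order_trans by blast
    qed
  qed
  have inv: "\<exists>k'. levrel b k' \<and> k \<le> k'" if "(a,b) \<in> R\<^sup>*" "levrel a k" for a b k
    using that(1)
  proof (induction rule: rtrancl_induct)
    case base then show ?case using \<open>levrel a k\<close> by blast
  next
    case (step y z)
    then obtain k' where "levrel y k'" "k \<le> k'" by blast
    then show ?case using step.hyps(2) \<open>\<And>a b k. (a,b) \<in> R \<Longrightarrow> levrel a k \<Longrightarrow> \<exists>k'. levrel b k' \<and> k \<le> k'\<close>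
      order_trans by blast
  qed
  have edge: "(a,b) \<in> orient_rel (\<Xi> k) (D k)" if "(a,b) \<in> R" "levrel a k" "levrel b k" for a b k
  proof -
    have kI: "k \<in> I" using \<open>levrel a k\<close> unfolding levrel_def by blast
    consider (d) "(a,b) \<in> DD" | (r) "(b,a) \<in> edges X" "(b,a) \<notin> DD"
      using \<open>(a,b) \<in> R\<close> unfolding R_def orient_rel_def by blast
    then show ?thesis
    proof cases
      case d
      then obtain j where j: "j \<in> I" "(a,b) \<in> D j" unfolding DD_def by blast
      then have "levrel a j" unfolding levrel_def using DkE by blast
      then have "j = k" using lev_uniq \<open>levrel a k\<close> by blast
      then show ?thesis using j unfolding orient_rel_def by blast
    next
      case r
      then have bt: "b \<in> triples X" "a \<in> pairs X" using EX by blast+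
      have "b \<notin> pairs X" using bt PT by blast
      then have b: "b \<in> triples (\<Xi> k)" using \<open>levrel b k\<close> DkE SP unfolding levrel_def by blast
      have "a \<notin> triples (\<Xi> k)" using bt PT ST kI by blast
      then obtain t' where t': "(t',a) \<in> D k" using \<open>levrel a k\<close> unfolding levrel_def by blast
      then have "a \<in> pairs (\<Xi> k)" using DkE kI by blast
      then have "(b,a) \<in> edges (\<Xi> k)" using FE[OF kI] b r(1) by blast
      moreover have "(b,a) \<notin> D k" using r(2) kI unfolding DD_def by blast
      ultimately show ?thesis unfolding orient_rel_def by blast
    qed
  qed
  have S4: "acyclic R"
  proof (rule ccontr)
    assume "\<not> acyclic R"
    then obtain x where x: "(x,x) \<in> R\<^sup>+" unfolding acyclic_def by blast
    then obtain y where y: "(y,x) \<in> R" by (meson tranclE)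
    have "\<exists>k. levrel x k"
    proof -
      consider (d) "(y,x) \<in> DD" | (r) "(x,y) \<in> edges X"
        using y unfolding R_def orient_rel_def by blast
      then show ?thesis
      proof cases
        case d then show ?thesis unfolding DD_def levrel_def by blast
      next
        case r then have "x \<in> triples X" using EX by blast
        then show ?thesis using trip_lev unfolding levrel_def by blast
      qed
    qed
    then obtain k where k: "levrel x k" by blast
    have kI: "k \<in> I" using k unfolding levrel_def by blast
    have scc: "levrel v k" if "(x,v) \<in> R\<^sup>*" "(v,x) \<in> R\<^sup>*" for v
    proof -
      obtain k1 where k1: "levrel v k1" "k \<le> k1" using inv[OF \<open>(x,v) \<in> R\<^sup>*\<close> k] by blast
      obtain k2 where k2: "levrel x k2" "k1 \<le> k2" using inv[OF \<open>(v,x) \<in> R\<^sup>*\<close> k1(1)] by blast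
      have "k2 = k" using lev_uniq k k2 by blast
      then show ?thesis using k1 k2 by (metis order_antisym)
    qed
    have main: "(x,v) \<in> (orient_rel (\<Xi> k) (D k))\<^sup>+" if "(x,v) \<in> R\<^sup>+" "(v,x) \<in> R\<^sup>*" for v
      using that
    proof (induction rule: trancl_induct)
      case (base v)
      then have "levrel v k" using scc by blast
      then show ?case using edge base k by blast
    next
      case (step y z)
      have yx: "(y,x) \<in> R\<^sup>*" using step by (meson converse_rtrancl_into_rtrancl)
      have "levrel y k" using scc yx step(1) by (meson trancl_into_rtrancl)
      moreover have "levrel z k" using scc step by (meson trancl_into_rtrancl rtrancl.rtrancl_into_rtrancl trancl_into_rtrancl)
      ultimately have "(y,z) \<in> orient_rel (\<Xi> k) (D k)" using edge step by blast
      then show ?case using step yx by (meson trancl.trancl_into_trancl)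
    qed
    have "(x,x) \<in> (orient_rel (\<Xi> k) (D k))\<^sup>+" using main x by blast
    then show False using DA kI unfolding acyclic_def by blast
  qed
  have "solution X DD" unfolding solution_def R_def[symmetric]
    using DD_sub S1 S2 S3 S4 by blast
  then show ?thesis unfolding solvable_def by blast
qed

end
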